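(* For every $P\in\mathbb P$ the following are equivalent: (1) $P$ is an extreme point of the convex set $E(P)=\{R\in\mathbb P: R(F)=P(F)\ \text{for all } F\in\mathcal F\}$; (2) $P$ satisfies the Blackwell–Dubins property; (3) for all $Q,R\in\mathbb P$ and $\alpha\in(0,1)$, if $P=\alpha Q+(1-\alpha)R$ then $P$ merges with $Q$ and with $R$.
   Context: Let $\Omega=\{0,1\}^{\mathbb N}$; $\omega^t$ is the cylinder of paths agreeing with $\omega$ in the first $t$ coordinates. $\mathcal F$ is the algebra of all finite unions of cylinders. $\Sigma$ is a fixed $\sigma$-algebra containing all cylinders; $\mathbb P$ the set of finitely additive probabilities on $(\Omega,\Sigma)$. $R(E\mid\omega^t)=R(E\cap\omega^t)/R(\omega^t)$ when $R(\omega^t)>0$. $P$ merges with $Q$ if for every $\varepsilon>0$, $\lim_{t\to\infty}Q(\{\omega:\sup_{E\in\Sigma}|P(E\mid\omega^t)-Q(E\mid\omega^t)|>\varepsilon\})=0$ (cylinders with $Q(\omega^t)>0=P(\omega^t)$ counted in the set). $Q\ll P$ means: for every sequence $(E_n)$ in $\Sigma$, $P(E_n)\to0$ implies $Q(E_n)\to0$. $P$ has the Blackwell–Dubins property if $P$ merges with every $Q\in\mathbb P$ with $Q\ll P$. *)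

theory Defs
  imports "HOL-Analysis.Analysis"
begin

type_synonym path = "nat \<Rightarrow> bool"

definition cyl :: "path \<Rightarrow> nat \<Rightarrow> path set" where
  "cyl w t = {w'. \<forall>i<t. w' i = w i}"

definition cylinders :: "path set set" where
  "cylinders = {cyl w t | w t. True}"

definition cyl_alg :: "path set set" where
  "cyl_alg = {\<Union>C | C. finite C \<and> C \<subseteq> cylinders}"

text \<open>Finitely additive probability on (Omega, S), represented as a real-valued set function
  which vanishes outside S (so that equality of probabilities is equality of functions).\<close>
definition fap :: "path set set \<Rightarrow> (path set \<Rightarrow> real) \<Rightarrow> bool" where
  "fap S P \<longleftrightarrow> (\<forall>E. E \<notin> S \<longrightarrow> P E = 0) \<and> (\<forall>E\<in>S. 0 \<le> P E) \<and> P UNIV = 1 \<and>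
     (\<forall>A\<in>S. \<forall>B\<in>S. A \<inter> B = {} \<longrightarrow> P (A \<union> B) = P A + P B)"

definition cond_prob :: "(path set \<Rightarrow> real) \<Rightarrow> path set \<Rightarrow> path \<Rightarrow> nat \<Rightarrow> real" where
  "cond_prob R E w t = R (E \<inter> cyl w t) / R (cyl w t)"

definition merges :: "path set set \<Rightarrow> (path set \<Rightarrow> real) \<Rightarrow> (path set \<Rightarrow> real) \<Rightarrow> bool" where
  "merges S P Q \<longleftrightarrow> (\<forall>\<epsilon>>0. (\<lambda>t. Q {w. Q (cyl w t) > 0 \<and>
        (P (cyl w t) = 0 \<or>
         (SUP E\<in>S. \<bar>cond_prob P E w t - cond_prob Q E w t\<bar>) > \<epsilon>)}) \<longlonglongrightarrow> 0)"

definition abs_cont :: "path set set \<Rightarrow> (path set \<Rightarrow> real) \<Rightarrow> (path set \<Rightarrow> real) \<Rightarrow> bool" where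
  "abs_cont S Q P \<longleftrightarrow> (\<forall>En. (\<forall>n. En n \<in> S) \<longrightarrow>
       (\<lambda>n. P (En n)) \<longlonglongrightarrow> 0 \<longrightarrow> (\<lambda>n. Q (En n)) \<longlonglongrightarrow> 0)"

definition blackwell_dubins :: "path set set \<Rightarrow> (path set \<Rightarrow> real) \<Rightarrow> bool" where
  "blackwell_dubins S P \<longleftrightarrow> (\<forall>Q. fap S Q \<longrightarrow> abs_cont S Q P \<longrightarrow> merges S P Q)"

definition EP :: "path set set \<Rightarrow> (path set \<Rightarrow> real) \<Rightarrow> (path set \<Rightarrow> real) set" where
  "EP S P = {R. fap S R \<and> (\<forall>F\<in>cyl_alg. R F = P F)}"

definition extreme_point :: "(path set \<Rightarrow> real) set \<Rightarrow> (path set \<Rightarrow> real) \<Rightarrow> bool" where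
  "extreme_point C P \<longleftrightarrow> P \<in> C \<and>
     (\<forall>Q\<in>C. \<forall>R\<in>C. \<forall>\<alpha>::real. 0 < \<alpha> \<and> \<alpha> < 1 \<and> P = (\<lambda>E. \<alpha> * Q E + (1 - \<alpha>) * R E)
        \<longrightarrow> Q = P \<and> R = P)"

end

theory Submission
  imports Defs
begin
definition rep :: "nat \<Rightarrow> path \<Rightarrow> path" where
  "rep t w = (\<lambda>i. if i < t then w i else False)"

definition reps :: "nat \<Rightarrow> path set" where
  "reps t = range (rep t)"

lemma cyl_rep[simp]: "cyl (rep t w) t = cyl w t"
  by (auto simp: cyl_def rep_def)

lemma in_cyl[simp]: "w \<in> cyl w t"
  by (auto simp: cyl_def)

lemma rep_in_reps[simp]: "rep t w \<in> reps t"
  by (simp add: reps_def)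

lemma rep_rep: "r \<in> reps t \<Longrightarrow> rep t r = r"
  by (auto simp: reps_def rep_def)

lemma in_cyl_reps: "r \<in> reps t \<Longrightarrow> w \<in> cyl r t \<Longrightarrow> r = rep t w"
  by (auto simp: reps_def rep_def cyl_def)

lemma finite_reps: "finite (reps t)"
proof -
  have "reps t \<subseteq> (\<lambda>A i. i \<in> A) ` Pow {..<t}"
  proof
    fix r assume "r \<in> reps t"
    then obtain w where r: "r = rep t w" by (auto simp: reps_def)
    have "r = (\<lambda>i. i \<in> {i. i < t \<and> w i})" by (auto simp: r rep_def)
    then show "r \<in> (\<lambda>A i. i \<in> A) ` Pow {..<t}" by blast
  qed
  then show ?thesis by (rule finite_subset) auto
qed

lemma cyl_disj: "r \<in> reps t \<Longrightarrow> r' \<in> reps t \<Longrightarrow> r \<noteq> r' \<Longrightarrow> cyl r t \<inter> cyl r' t = {}"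
  using in_cyl_reps by blast

lemma disjoint_cyls: "disjoint_family_on (\<lambda>r. cyl r t) (reps t)"
  unfolding disjoint_family_on_def using cyl_disj by blast

lemma Union_cyls: "(\<Union>r\<in>reps t. cyl r t) = UNIV"
proof -
  have "w \<in> (\<Union>r\<in>reps t. cyl r t)" for w
    using in_cyl[of w t] rep_in_reps[of t w] cyl_rep[of t w] by blast
  then show ?thesis by blast
qed

lemma cyl_refine:
  assumes "s \<le> t" "x \<in> cyl r t" "x \<in> cyl w s"
  shows "cyl r t \<subseteq> cyl w s"
  using assms by (auto simp: cyl_def)

lemma cyl_sub_rep: "s \<le> t \<Longrightarrow> cyl r t \<subseteq> cyl (rep s r) s"
  by (auto simp: cyl_def rep_def)

lemma cyl_in_cylinders[simp]: "cyl w t \<in> cylinders"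
  by (auto simp: cylinders_def)

lemma cyl0: "cyl w 0 = UNIV"
  by (auto simp: cyl_def)

lemma UNIV_cyl_alg: "UNIV \<in> cyl_alg"
proof -
  have "UNIV = \<Union>{cyl (\<lambda>_. False) 0}" by (simp add: cyl0)
  then show ?thesis unfolding cyl_alg_def by fastforce
qed

lemma cyl_alg_S: assumes S: "sigma_algebra UNIV S" "cylinders \<subseteq> S" shows "cyl_alg \<subseteq> S"
proof
  fix F assume "F \<in> cyl_alg"
  then obtain C where C: "F = \<Union>C" "finite C" "C \<subseteq> cylinders" by (auto simp: cyl_alg_def)
  interpret sigma_algebra UNIV S by fact
  show "F \<in> S" unfolding C(1) by (rule finite_Union) (use C S(2) in auto)
qed

lemma cyl_alg_level:
  assumes "F \<in> cyl_alg"
  shows "\<exists>L. \<forall>t\<ge>L. \<forall>r. cyl r t \<subseteq> F \<or> cyl r t \<inter> F = {}"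
proof -
  obtain C where C: "F = \<Union>C" "finite C" "C \<subseteq> cylinders" using assms by (auto simp: cyl_alg_def)
  have "\<exists>L. \<forall>t\<ge>L. \<forall>r. cyl r t \<subseteq> \<Union>C \<or> cyl r t \<inter> \<Union>C = {}"
    using C(2,3)
  proof (induction C rule: finite_induct)
    case empty then show ?case by auto
  next
    case (insert c C)
    then obtain L where L: "\<forall>t\<ge>L. \<forall>r. cyl r t \<subseteq> \<Union>C \<or> cyl r t \<inter> \<Union>C = {}" by auto
    from insert obtain w s where c: "c = cyl w s" by (auto simp: cylinders_def)
    have "\<forall>t\<ge>max L s. \<forall>r. cyl r t \<subseteq> \<Union>(insert c C) \<or> cyl r t \<inter> \<Union>(insert c C) = {}"
    proof (intro allI impI)
      fix t r assume t: "max L s \<le> t"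
      show "cyl r t \<subseteq> \<Union>(insert c C) \<or> cyl r t \<inter> \<Union>(insert c C) = {}"
      proof (cases "cyl r t \<inter> c = {}")
        case True
        from L t have "cyl r t \<subseteq> \<Union>C \<or> cyl r t \<inter> \<Union>C = {}" by auto
        with True show ?thesis by blast
      next
        case False
        then obtain x where "x \<in> cyl r t" "x \<in> cyl w s" using c by auto
        then have "cyl r t \<subseteq> c" using cyl_refine[of s t x r w] t c by auto
        then show ?thesis by auto
      qed
    qed
    then show ?case by blast
  qed
  then show ?thesis using C by simp
qed

definition charge :: "path set set \<Rightarrow> (path set \<Rightarrow> real) \<Rightarrow> bool" where
  "charge S \<mu> \<longleftrightarrow> (\<forall>A\<in>S. \<forall>B\<in>S. A \<inter> B = {} \<longrightarrow> \<mu> (A \<union> B) = \<mu> A + \<mu> B)"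

lemma charge_add: "charge S \<mu> \<Longrightarrow> A \<in> S \<Longrightarrow> B \<in> S \<Longrightarrow> A \<inter> B = {} \<Longrightarrow> \<mu> (A \<union> B) = \<mu> A + \<mu> B"
  unfolding charge_def by blast

lemma S_Int: "sigma_algebra UNIV S \<Longrightarrow> A \<in> S \<Longrightarrow> B \<in> S \<Longrightarrow> A \<inter> B \<in> S"
proof - assume "sigma_algebra UNIV S" then interpret sigma_algebra UNIV S . show "A \<in> S \<Longrightarrow> B \<in> S \<Longrightarrow> A \<inter> B \<in> S" by blast qed
lemma S_Un: "sigma_algebra UNIV S \<Longrightarrow> A \<in> S \<Longrightarrow> B \<in> S \<Longrightarrow> A \<union> B \<in> S"
proof - assume "sigma_algebra UNIV S" then interpret sigma_algebra UNIV S . show "A \<in> S \<Longrightarrow> B \<in> S \<Longrightarrow> A \<union> B \<in> S" by blast qed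
lemma S_Diff: "sigma_algebra UNIV S \<Longrightarrow> A \<in> S \<Longrightarrow> B \<in> S \<Longrightarrow> A - B \<in> S"
proof - assume "sigma_algebra UNIV S" then interpret sigma_algebra UNIV S . show "A \<in> S \<Longrightarrow> B \<in> S \<Longrightarrow> A - B \<in> S" by blast qed
lemma S_UNIV: "sigma_algebra UNIV S \<Longrightarrow> UNIV \<in> S"
proof - assume "sigma_algebra UNIV S" then interpret sigma_algebra UNIV S . show "UNIV \<in> S" using top by blast qed
lemma S_empty: "sigma_algebra UNIV S \<Longrightarrow> {} \<in> S"
proof - assume "sigma_algebra UNIV S" then interpret sigma_algebra UNIV S . show "{} \<in> S" by blast qed
lemma S_UN: "sigma_algebra UNIV S \<Longrightarrow> finite I \<Longrightarrow> (\<And>i. i \<in> I \<Longrightarrow> A i \<in> S) \<Longrightarrow> (\<Union>i\<in>I. A i) \<in> S"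
proof - assume "sigma_algebra UNIV S" then interpret sigma_algebra UNIV S . show "finite I \<Longrightarrow> (\<And>i. i \<in> I \<Longrightarrow> A i \<in> S) \<Longrightarrow> (\<Union>i\<in>I. A i) \<in> S" by blast qed

lemma fap_charge: "fap S P \<Longrightarrow> charge S P"
  by (simp add: fap_def charge_def)

lemma charge_empty:
  assumes "sigma_algebra UNIV S" "charge S \<mu>" shows "\<mu> {} = 0"
proof -
  have "\<mu> ({} \<union> {}) = \<mu> {} + \<mu> {}" using charge_add[OF assms(2) S_empty[OF assms(1)] S_empty[OF assms(1)]] by simp
  then show ?thesis by simp
qed

lemma charge_sum:
  assumes "sigma_algebra UNIV S" "charge S \<mu>" "finite I" "\<forall>i\<in>I. A i \<in> S" "disjoint_family_on A I"
  shows "\<mu> (\<Union>i\<in>I. A i) = (\<Sum>i\<in>I. \<mu> (A i))"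
  using assms(3-5)
proof (induction I rule: finite_induct)
  case empty then show ?case using charge_empty[OF assms(1,2)] by simp
next
  case (insert i I)
  have U: "(\<Union>j\<in>I. A j) \<in> S" using insert(1,4) by (intro S_UN[OF assms(1)]) auto
  have D: "A i \<inter> (\<Union>j\<in>I. A j) = {}"
  proof -
    have "A i \<inter> A j = {}" if j: "j \<in> I" for j
    proof -
      have "i \<noteq> j" using insert(2) j by auto
      then show ?thesis using insert(5) j unfolding disjoint_family_on_def by auto
    qed
    then show ?thesis by blast
  qed
  have "\<mu> (\<Union>j\<in>insert i I. A j) = \<mu> (A i \<union> (\<Union>j\<in>I. A j))" by simp
  also have "\<dots> = \<mu> (A i) + \<mu> (\<Union>j\<in>I. A j)" using insert(4) by (intro charge_add[OF assms(2) _ U D]) auto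
  also have "\<mu> (\<Union>j\<in>I. A j) = (\<Sum>j\<in>I. \<mu> (A j))"
  proof (rule insert.IH)
    show "\<forall>i\<in>I. A i \<in> S" using insert(4) by auto
    show "disjoint_family_on A I" using disjoint_family_on_mono[OF _ insert(5)] by blast
  qed
  finally show ?case using insert(1,2) by simp
qed

lemma cyl_S: "cylinders \<subseteq> S \<Longrightarrow> cyl w t \<in> S"
  by auto

lemma charge_decomp:
  assumes "sigma_algebra UNIV S" "cylinders \<subseteq> S" "charge S \<mu>" "E \<in> S"
  shows "\<mu> E = (\<Sum>r\<in>reps t. \<mu> (E \<inter> cyl r t))"
proof -
  have "E = (\<Union>r\<in>reps t. E \<inter> cyl r t)" using Union_cyls[of t] by blast
  also have "\<mu> \<dots> = (\<Sum>r\<in>reps t. \<mu> (E \<inter> cyl r t))"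
  proof (rule charge_sum[OF assms(1,3) finite_reps])
    show "\<forall>i\<in>reps t. E \<inter> cyl i t \<in> S" using S_Int[OF assms(1) assms(4) cyl_S[OF assms(2)]] by blast
    show "disjoint_family_on (\<lambda>r. E \<inter> cyl r t) (reps t)"
      using disjoint_cyls[of t] unfolding disjoint_family_on_def by blast
  qed
  finally show ?thesis .
qed

lemma charge_mono:
  assumes "sigma_algebra UNIV S" "charge S \<mu>" "\<forall>E\<in>S. 0 \<le> \<mu> E" "A \<in> S" "B \<in> S" "A \<subseteq> B"
  shows "\<mu> A \<le> \<mu> B"
proof -
  have BA: "B - A \<in> S" using S_Diff[OF assms(1,5,4)] .
  have "B = A \<union> (B - A)" using assms(6) by blast
  then have "\<mu> B = \<mu> A + \<mu> (B - A)" using charge_add[OF assms(2,4) BA] by auto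
  moreover have "0 \<le> \<mu> (B - A)" using assms(3) BA by auto
  ultimately show ?thesis by simp
qed

lemma fap_nonneg: "fap S P \<Longrightarrow> \<forall>E\<in>S. 0 \<le> P E"
  by (simp add: fap_def)

lemma fap_nonneg': "fap S P \<Longrightarrow> 0 \<le> P E"
  by (cases "E \<in> S") (auto simp: fap_def)

lemma rep_rep_le: "s \<le> t \<Longrightarrow> rep s (rep t x) = rep s x"
  by (auto simp: rep_def)

lemma charge_group:
  assumes "sigma_algebra UNIV S" "cylinders \<subseteq> S" "charge S m" "s \<le> t" "E \<in> S"
  shows "(\<Sum>r'\<in>reps t. g (rep s r') * m (E \<inter> cyl r' t)) = (\<Sum>r\<in>reps s. g r * m (E \<inter> cyl r s))"
proof -
  have part: "m (E \<inter> cyl r s) = (\<Sum>r'\<in>{r'\<in>reps t. rep s r' = r}. m (E \<inter> cyl r' t))"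
    if r: "r \<in> reps s" for r
  proof -
    have "E \<inter> cyl r s = (\<Union>r'\<in>{r'\<in>reps t. rep s r' = r}. E \<inter> cyl r' t)"
    proof
      show "E \<inter> cyl r s \<subseteq> (\<Union>r'\<in>{r'\<in>reps t. rep s r' = r}. E \<inter> cyl r' t)"
      proof
        fix x assume x: "x \<in> E \<inter> cyl r s"
        then have "r = rep s x" using in_cyl_reps[OF r] by blast
        then have "rep s (rep t x) = r" using rep_rep_le[OF assms(4)] by simp
        moreover have "x \<in> cyl (rep t x) t" by simp
        moreover have "rep t x \<in> reps t" by simp
        ultimately show "x \<in> (\<Union>r'\<in>{r'\<in>reps t. rep s r' = r}. E \<inter> cyl r' t)" using x by blast
      qed
      show "(\<Union>r'\<in>{r'\<in>reps t. rep s r' = r}. E \<inter> cyl r' t) \<subseteq> E \<inter> cyl r s"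
        using cyl_sub_rep[OF assms(4)] by blast
    qed
    also have "m \<dots> = (\<Sum>r'\<in>{r'\<in>reps t. rep s r' = r}. m (E \<inter> cyl r' t))"
    proof (rule charge_sum[OF assms(1,3)])
      show "finite {r' \<in> reps t. rep s r' = r}" using finite_reps[of t] by simp
      show "\<forall>i\<in>{r' \<in> reps t. rep s r' = r}. E \<inter> cyl i t \<in> S"
        using S_Int[OF assms(1) assms(5) cyl_S[OF assms(2)]] by blast
      show "disjoint_family_on (\<lambda>r'. E \<inter> cyl r' t) {r' \<in> reps t. rep s r' = r}"
        using disjoint_cyls[of t] unfolding disjoint_family_on_def by blast
    qed
    finally show ?thesis .
  qed
  have "(\<Sum>r\<in>reps s. g r * m (E \<inter> cyl r s))
      = (\<Sum>r\<in>reps s. (\<Sum>r'\<in>{r'\<in>reps t. rep s r' = r}. g (rep s r') * m (E \<inter> cyl r' t)))"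
    by (intro sum.cong refl) (simp add: part sum_distrib_left)
  also have "\<dots> = (\<Sum>r'\<in>reps t. g (rep s r') * m (E \<inter> cyl r' t))"
    using finite_reps[of s] finite_reps[of t] by (intro sum.group) (auto simp: reps_def)
  finally show ?thesis by simp
qed

lemma ratio_bound:
  assumes "sigma_algebra UNIV S" "fap S R" "E \<in> S" "c \<in> S"
  shows "0 \<le> R (E \<inter> c) / R c \<and> R (E \<inter> c) / R c \<le> 1"
proof -
  have Ec: "E \<inter> c \<in> S" using S_Int[OF assms(1,3,4)] .
  have le: "R (E \<inter> c) \<le> R c"
    using charge_mono[OF assms(1) fap_charge[OF assms(2)] fap_nonneg[OF assms(2)] Ec assms(4)] by blast
  have nn: "0 \<le> R (E \<inter> c)" using fap_nonneg'[OF assms(2)] .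
  show ?thesis
  proof (cases "R c = 0")
    case True then show ?thesis by simp
  next
    case False
    then have "R c > 0" using fap_nonneg'[OF assms(2), of c] by simp
    then show ?thesis using le nn by (simp add: divide_le_eq_1)
  qed
qed

lemma bdd_sup:
  assumes "sigma_algebra UNIV S" "fap S P" "fap S Q" "c \<in> S"
  shows "bdd_above ((\<lambda>E. \<bar>P (E \<inter> c) / P c - Q (E \<inter> c) / Q c\<bar>) ` S)"
proof (rule bdd_aboveI2)
  fix E assume "E \<in> S"
  then show "\<bar>P (E \<inter> c) / P c - Q (E \<inter> c) / Q c\<bar> \<le> 2"
    using ratio_bound[OF assms(1,2) _ assms(4), of E] ratio_bound[OF assms(1,3) _ assms(4), of E] by linarith
qed

lemma cyl_set_eq: "{w. \<Phi> (cyl w t)} = (\<Union>r\<in>{r\<in>reps t. \<Phi> (cyl r t)}. cyl r t)"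
proof
  show "{w. \<Phi> (cyl w t)} \<subseteq> (\<Union>r\<in>{r\<in>reps t. \<Phi> (cyl r t)}. cyl r t)"
  proof
    fix w assume "w \<in> {w. \<Phi> (cyl w t)}"
    then have "\<Phi> (cyl (rep t w) t)" by simp
    moreover have "w \<in> cyl (rep t w) t" by simp
    moreover have "rep t w \<in> reps t" by simp
    ultimately show "w \<in> (\<Union>r\<in>{r\<in>reps t. \<Phi> (cyl r t)}. cyl r t)" by blast
  qed
  show "(\<Union>r\<in>{r\<in>reps t. \<Phi> (cyl r t)}. cyl r t) \<subseteq> {w. \<Phi> (cyl w t)}"
  proof
    fix w assume "w \<in> (\<Union>r\<in>{r\<in>reps t. \<Phi> (cyl r t)}. cyl r t)"
    then obtain r where r: "r \<in> reps t" "\<Phi> (cyl r t)" "w \<in> cyl r t" by blast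
    then have "r = rep t w" using in_cyl_reps by blast
    then show "w \<in> {w. \<Phi> (cyl w t)}" using r by simp
  qed
qed

lemma cyl_set_measure:
  assumes "sigma_algebra UNIV S" "cylinders \<subseteq> S" "charge S Q"
  shows "Q {w. \<Phi> (cyl w t)} = (\<Sum>r\<in>{r\<in>reps t. \<Phi> (cyl r t)}. Q (cyl r t))"
  unfolding cyl_set_eq
proof (rule charge_sum[OF assms(1,3)])
  show "finite {r \<in> reps t. \<Phi> (cyl r t)}" using finite_reps[of t] by simp
  show "\<forall>i\<in>{r \<in> reps t. \<Phi> (cyl r t)}. cyl i t \<in> S" using assms(2) by auto
  show "disjoint_family_on (\<lambda>r. cyl r t) {r \<in> reps t. \<Phi> (cyl r t)}"
    using disjoint_cyls[of t] unfolding disjoint_family_on_def by blast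
qed

lemma cyl_in_alg: "cyl w t \<in> cyl_alg"
proof -
  have "cyl w t = \<Union>{cyl w t}" by simp
  then show ?thesis unfolding cyl_alg_def by fastforce
qed

lemma merge_eq:
  assumes sa: "sigma_algebra UNIV S" and cy: "cylinders \<subseteq> S" and fP: "fap S P" and fQ: "fap S Q"
    and agree: "\<forall>F\<in>cyl_alg. Q F = P F" and mg: "merges S P Q"
  shows "Q = P"
proof
  fix E
  show "Q E = P E"
  proof (cases "E \<in> S")
    case False then show ?thesis using fP fQ by (simp add: fap_def)
  next
    case E: True
    have main: "\<bar>P E - Q E\<bar> \<le> \<epsilon>" if \<epsilon>: "\<epsilon> > 0" for \<epsilon>
    proof -
      define \<Phi> where "\<Phi> c = (Q c > 0 \<and> (P c = 0 \<or> (SUP E\<in>S. \<bar>P (E \<inter> c) / P c - Q (E \<inter> c) / Q c\<bar>) > \<epsilon>))" for c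
      have lim: "(\<lambda>t. Q {w. \<Phi> (cyl w t)}) \<longlonglongrightarrow> 0"
        using mg \<epsilon> unfolding merges_def cond_prob_def \<Phi>_def by blast
      have bnd: "\<bar>P E - Q E\<bar> - \<epsilon> \<le> Q {w. \<Phi> (cyl w t)}" for t
      proof -
        define G where "G = {r\<in>reps t. \<Phi> (cyl r t)}"
        have pt: "\<bar>P (E \<inter> cyl r t) - Q (E \<inter> cyl r t)\<bar> \<le> (if r \<in> G then Q (cyl r t) else 0) + \<epsilon> * Q (cyl r t)"
          if r: "r \<in> reps t" for r
        proof -
          define c where "c = cyl r t"
          have cS: "c \<in> S" using cy by (auto simp: c_def)
          have Pc: "P c = Q c" using agree cyl_in_alg by (simp add: c_def)
          have Qc0: "0 \<le> Q c" using fap_nonneg'[OF fQ] .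
          have EcS: "E \<inter> c \<in> S" using S_Int[OF sa E cS] .
          have leP: "P (E \<inter> c) \<le> P c" "0 \<le> P (E \<inter> c)"
            using charge_mono[OF sa fap_charge[OF fP] fap_nonneg[OF fP] EcS cS] fap_nonneg'[OF fP] by auto
          have leQ: "Q (E \<inter> c) \<le> Q c" "0 \<le> Q (E \<inter> c)"
            using charge_mono[OF sa fap_charge[OF fQ] fap_nonneg[OF fQ] EcS cS] fap_nonneg'[OF fQ] by auto
          show ?thesis
          proof (cases "r \<in> G")
            case True
            have "\<bar>P (E \<inter> c) - Q (E \<inter> c)\<bar> \<le> Q c" using leP leQ Pc by linarith
            moreover have "0 \<le> \<epsilon> * Q c" using Qc0 \<epsilon> by simp
            ultimately show ?thesis using True by (simp add: c_def[symmetric])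
          next
            case False
            show ?thesis
            proof (cases "Q c = 0")
              case True
              then have "P (E \<inter> c) = 0" "Q (E \<inter> c) = 0" using leP leQ Pc by auto
              then show ?thesis using False True by (simp add: c_def[symmetric])
            next
              case Qpos: False
              then have Qp: "Q c > 0" using Qc0 by simp
              have nb: "\<not> \<Phi> c" using False r by (simp add: G_def c_def)
              then have "(SUP E\<in>S. \<bar>P (E \<inter> c) / P c - Q (E \<inter> c) / Q c\<bar>) \<le> \<epsilon>"
                using Qp Pc unfolding \<Phi>_def by auto
              moreover have "\<bar>P (E \<inter> c) / P c - Q (E \<inter> c) / Q c\<bar> \<le> (SUP E\<in>S. \<bar>P (E \<inter> c) / P c - Q (E \<inter> c) / Q c\<bar>)"
                by (rule cSUP_upper[OF E bdd_sup[OF sa fP fQ cS]])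
              ultimately have "\<bar>P (E \<inter> c) / Q c - Q (E \<inter> c) / Q c\<bar> \<le> \<epsilon>" using Pc by simp
              then have "\<bar>P (E \<inter> c) - Q (E \<inter> c)\<bar> / Q c \<le> \<epsilon>" using Qp by (simp add: diff_divide_distrib[symmetric])
              then have "\<bar>P (E \<inter> c) - Q (E \<inter> c)\<bar> \<le> \<epsilon> * Q c" using Qp by (simp add: divide_le_eq)
              then show ?thesis using False by (simp add: c_def[symmetric])
            qed
          qed
        qed
        have "P E - Q E = (\<Sum>r\<in>reps t. P (E \<inter> cyl r t) - Q (E \<inter> cyl r t))"
          using charge_decomp[OF sa cy fap_charge[OF fP] E, of t] charge_decomp[OF sa cy fap_charge[OF fQ] E, of t]
          by (simp add: sum_subtractf)
        then have "\<bar>P E - Q E\<bar> \<le> (\<Sum>r\<in>reps t. \<bar>P (E \<inter> cyl r t) - Q (E \<inter> cyl r t)\<bar>)"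
          by (simp add: sum_abs)
        also have "\<dots> \<le> (\<Sum>r\<in>reps t. (if r \<in> G then Q (cyl r t) else 0) + \<epsilon> * Q (cyl r t))"
          by (rule sum_mono) (rule pt)
        also have "\<dots> = (\<Sum>r\<in>G. Q (cyl r t)) + \<epsilon> * (\<Sum>r\<in>reps t. Q (cyl r t))"
          by (simp add: sum.distrib sum_distrib_left sum.If_cases G_def finite_reps Int_def)
        also have "(\<Sum>r\<in>reps t. Q (cyl r t)) = 1"
          using charge_decomp[OF sa cy fap_charge[OF fQ] S_UNIV[OF sa], of t] fQ by (simp add: fap_def)
        also have "(\<Sum>r\<in>G. Q (cyl r t)) = Q {w. \<Phi> (cyl w t)}"
          using cyl_set_measure[OF sa cy fap_charge[OF fQ]] by (simp add: G_def)
        finally show ?thesis by simp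
      qed
      have "\<bar>P E - Q E\<bar> - \<epsilon> \<le> 0"
        by (rule LIMSEQ_le_const[OF lim]) (use bnd in auto)
      then show ?thesis by simp
    qed
    have "\<bar>P E - Q E\<bar> \<le> 0"
      by (rule field_le_epsilon) (use main in auto)
    then show ?thesis by simp
  qed
qed

lemma mix_abs_cont:
  assumes fQ: "fap S Q" and fR: "fap S R" and a: "0 < \<alpha>" "\<alpha> < 1"
    and P: "P = (\<lambda>E. \<alpha> * Q E + (1 - \<alpha>) * R E)"
  shows "abs_cont S Q P"
  unfolding abs_cont_def
proof (intro allI impI)
  fix En :: "nat \<Rightarrow> path set" assume "\<forall>n. En n \<in> S" and lim: "(\<lambda>n. P (En n)) \<longlonglongrightarrow> 0"
  have lim2: "(\<lambda>n. P (En n) / \<alpha>) \<longlonglongrightarrow> 0" using tendsto_divide_zero[OF lim] .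
  show "(\<lambda>n. Q (En n)) \<longlonglongrightarrow> 0"
  proof (rule tendsto_sandwich[OF _ _ tendsto_const lim2])
    show "\<forall>\<^sub>F n in sequentially. 0 \<le> Q (En n)" using fap_nonneg'[OF fQ] by simp
    show "\<forall>\<^sub>F n in sequentially. Q (En n) \<le> P (En n) / \<alpha>"
    proof (intro always_eventually allI)
      fix n
      have "0 \<le> (1 - \<alpha>) * R (En n)" using fap_nonneg'[OF fR] a by simp
      then have "\<alpha> * Q (En n) \<le> P (En n)" using P by simp
      then show "Q (En n) \<le> P (En n) / \<alpha>" using a by (simp add: le_divide_eq mult.commute)
    qed
  qed
qed

lemma dir23:
  assumes bd: "blackwell_dubins S P"
  shows "\<forall>Q R. \<forall>\<alpha>::real. fap S Q \<longrightarrow> fap S R \<longrightarrow> 0 < \<alpha> \<longrightarrow> \<alpha> < 1 \<longrightarrow>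
              P = (\<lambda>E. \<alpha> * Q E + (1 - \<alpha>) * R E) \<longrightarrow> merges S P Q \<and> merges S P R"
proof (intro allI impI)
  fix Q R and \<alpha> :: real
  assume fQ: "fap S Q" and fR: "fap S R" and a: "0 < \<alpha>" "\<alpha> < 1" and P: "P = (\<lambda>E. \<alpha> * Q E + (1 - \<alpha>) * R E)"
  have P': "P = (\<lambda>E. (1 - \<alpha>) * R E + (1 - (1 - \<alpha>)) * Q E)" using P by auto
  have "abs_cont S Q P" by (rule mix_abs_cont[OF fQ fR a P])
  moreover have "abs_cont S R P" by (rule mix_abs_cont[OF fR fQ _ _ P']) (use a in auto)
  ultimately show "merges S P Q \<and> merges S P R" using bd fQ fR unfolding blackwell_dubins_def by blast
qed

lemma dir31:
  assumes sa: "sigma_algebra UNIV S" and cy: "cylinders \<subseteq> S" and fP: "fap S P"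
    and H: "\<forall>Q R. \<forall>\<alpha>::real. fap S Q \<longrightarrow> fap S R \<longrightarrow> 0 < \<alpha> \<longrightarrow> \<alpha> < 1 \<longrightarrow>
              P = (\<lambda>E. \<alpha> * Q E + (1 - \<alpha>) * R E) \<longrightarrow> merges S P Q \<and> merges S P R"
  shows "extreme_point (EP S P) P"
  unfolding extreme_point_def
proof (intro conjI ballI allI impI)
  show "P \<in> EP S P" using fP by (simp add: EP_def)
  fix Q R and \<alpha> :: real
  assume Q: "Q \<in> EP S P" and R: "R \<in> EP S P" and a: "0 < \<alpha> \<and> \<alpha> < 1 \<and> P = (\<lambda>E. \<alpha> * Q E + (1 - \<alpha>) * R E)"
  have fQ: "fap S Q" and aQ: "\<forall>F\<in>cyl_alg. Q F = P F" using Q by (auto simp: EP_def)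
  have fR: "fap S R" using R by (auto simp: EP_def)
  have "merges S P Q" using H fQ fR a by blast
  then have QP: "Q = P" by (rule merge_eq[OF sa cy fP fQ aQ])
  show "Q = P" by (rule QP)
  show "R = P"
  proof
    fix E
    have "P E = \<alpha> * P E + (1 - \<alpha>) * R E" using a QP by (metis)
    then have "(1 - \<alpha>) * (R E - P E) = 0" by (simp add: algebra_simps)
    then show "R E = P E" using a by simp
  qed
qed

lemma extreme_unique:
  assumes sa: "sigma_algebra UNIV S" and cy: "cylinders \<subseteq> S" and fP: "fap S P"
    and ex: "extreme_point (EP S P) P"
    and c1: "charge S l1" and c2: "charge S l2"
    and b1: "\<forall>E\<in>S. 0 \<le> l1 E \<and> l1 E \<le> K * P E"
    and b2: "\<forall>E\<in>S. 0 \<le> l2 E \<and> l2 E \<le> K * P E"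
    and ag: "\<forall>F\<in>cyl_alg. l1 F = l2 F"
  shows "\<forall>E\<in>S. l1 E = l2 E"
proof -
  define K' where "K' = \<bar>K\<bar> + 1"
  have K'pos: "K' > 0" by (simp add: K'_def)
  have b1': "\<forall>E\<in>S. 0 \<le> l1 E \<and> l1 E \<le> K' * P E"
  proof
    fix E assume E: "E \<in> S"
    have "K * P E \<le> K' * P E" using fap_nonneg'[OF fP, of E] by (intro mult_right_mono) (auto simp: K'_def)
    then show "0 \<le> l1 E \<and> l1 E \<le> K' * P E" using b1 E by fastforce
  qed
  have b2': "\<forall>E\<in>S. 0 \<le> l2 E \<and> l2 E \<le> K' * P E"
  proof
    fix E assume E: "E \<in> S"
    have "K * P E \<le> K' * P E" using fap_nonneg'[OF fP, of E] by (intro mult_right_mono) (auto simp: K'_def)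
    then show "0 \<le> l2 E \<and> l2 E \<le> K' * P E" using b2 E by fastforce
  qed
  define Pp where "Pp E = (if E \<in> S then P E + (l1 E - l2 E) / (2 * K') else 0)" for E
  define Pm where "Pm E = (if E \<in> S then P E - (l1 E - l2 E) / (2 * K') else 0)" for E
  have calS: "cyl_alg \<subseteq> S" by (rule cyl_alg_S[OF sa cy])
  have U: "l1 UNIV = l2 UNIV" using ag UNIV_cyl_alg by blast
  have PU: "P UNIV = 1" using fP by (simp add: fap_def)
  have USS: "UNIV \<in> S" by (rule S_UNIV[OF sa])
  have fPp: "fap S Pp"
    unfolding fap_def
  proof (intro conjI allI impI ballI)
    fix E assume "E \<notin> S" then show "Pp E = 0" by (simp add: Pp_def)
  next
    fix E assume E: "E \<in> S"
    have "l2 E / (2 * K') \<le> K' * P E / (2 * K')" using b2' E K'pos by (intro divide_right_mono) auto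
    also have "\<dots> = P E / 2" using K'pos by simp
    finally have "l2 E / (2 * K') \<le> P E / 2" .
    moreover have "0 \<le> l1 E / (2 * K')" using b1' E K'pos by simp
    moreover have "0 \<le> P E" using fap_nonneg'[OF fP] .
    ultimately show "0 \<le> Pp E" using E by (simp add: Pp_def diff_divide_distrib)
  next
    show "Pp UNIV = 1" using U PU USS by (simp add: Pp_def)
  next
    fix A B assume A: "A \<in> S" and B: "B \<in> S" and AB: "A \<inter> B = {}"
    have "A \<union> B \<in> S" by (rule S_Un[OF sa A B])
    then show "Pp (A \<union> B) = Pp A + Pp B"
      using A B AB charge_add[OF c1 A B AB] charge_add[OF c2 A B AB] charge_add[OF fap_charge[OF fP] A B AB]
      by (simp add: Pp_def add_divide_distrib diff_divide_distrib)
  qed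
  have fPm: "fap S Pm"
    unfolding fap_def
  proof (intro conjI allI impI ballI)
    fix E assume "E \<notin> S" then show "Pm E = 0" by (simp add: Pm_def)
  next
    fix E assume E: "E \<in> S"
    have "l1 E / (2 * K') \<le> K' * P E / (2 * K')" using b1' E K'pos by (intro divide_right_mono) auto
    also have "\<dots> = P E / 2" using K'pos by simp
    finally have "l1 E / (2 * K') \<le> P E / 2" .
    moreover have "0 \<le> l2 E / (2 * K')" using b2' E K'pos by simp
    moreover have "0 \<le> P E" using fap_nonneg'[OF fP] .
    ultimately show "0 \<le> Pm E" using E by (simp add: Pm_def diff_divide_distrib)
  next
    show "Pm UNIV = 1" using U PU USS by (simp add: Pm_def)
  next
    fix A B assume A: "A \<in> S" and B: "B \<in> S" and AB: "A \<inter> B = {}"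
    have "A \<union> B \<in> S" by (rule S_Un[OF sa A B])
    then show "Pm (A \<union> B) = Pm A + Pm B"
      using A B AB charge_add[OF c1 A B AB] charge_add[OF c2 A B AB] charge_add[OF fap_charge[OF fP] A B AB]
      by (simp add: Pm_def add_divide_distrib diff_divide_distrib)
  qed
  have "Pp \<in> EP S P" using fPp ag calS by (auto simp: EP_def Pp_def)
  moreover have "Pm \<in> EP S P" using fPm ag calS by (auto simp: EP_def Pm_def)
  moreover have "P = (\<lambda>E. (1/2) * Pp E + (1 - 1/2) * Pm E)"
  proof
    fix E show "P E = (1/2) * Pp E + (1 - 1/2) * Pm E"
      proof (cases "E \<in> S")
      case True then show ?thesis by (simp add: Pp_def Pm_def) (simp add: field_simps)
    next
      case False then show ?thesis using fP by (simp add: Pp_def Pm_def fap_def)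
    qed
  qed
  moreover have "0 < (1/2::real) \<and> (1/2::real) < 1" by simp
  ultimately have "Pp = P" using ex unfolding extreme_point_def by blast
  show ?thesis
  proof
    fix E assume E: "E \<in> S"
    have "Pp E = P E" using \<open>Pp = P\<close> by simp
    then have "(l1 E - l2 E) / (2 * K') = 0" using E by (simp add: Pp_def)
    then show "l1 E = l2 E" using K'pos by simp
  qed
qed

definition T :: "(path set \<Rightarrow> real) \<Rightarrow> (path set \<Rightarrow> real) \<Rightarrow> nat \<Rightarrow> path set \<Rightarrow> real" where
  "T P \<mu> t E = (\<Sum>r\<in>reps t. \<mu> (cyl r t) / P (cyl r t) * P (E \<inter> cyl r t))"

locale bnd =
  fixes S P \<mu> K
  assumes sa: "sigma_algebra UNIV S" and cy: "cylinders \<subseteq> S" and fP: "fap S P"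
    and cm: "charge S \<mu>" and nn: "\<forall>E\<in>S. 0 \<le> \<mu> E" and le: "\<forall>E\<in>S. \<mu> E \<le> K * P E"
begin

definition f where "f t r = \<mu> (cyl r t) / P (cyl r t)"
definition \<phi> where "\<phi> t = (\<Sum>r\<in>reps t. f t r * \<mu> (cyl r t))"

lemma cS: "cyl r t \<in> S" using cy by auto

lemma Pnn: "0 \<le> P E" using fap_nonneg'[OF fP] .

lemma K0: "0 \<le> K"
proof -
  have "0 \<le> \<mu> UNIV" "\<mu> UNIV \<le> K * P UNIV" using nn le S_UNIV[OF sa] by auto
  moreover have "P UNIV = 1" using fP by (simp add: fap_def)
  ultimately show ?thesis by simp
qed

lemma c0: "P (cyl r t) = 0 \<Longrightarrow> \<mu> (cyl r t) = 0"
  using nn le cS[of r t] by force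

lemma fmu: "P (cyl r t) * f t r = \<mu> (cyl r t)"
  using c0[of r t] by (cases "P (cyl r t) = 0") (auto simp: f_def)

lemma f_nn: "0 \<le> f t r" using nn cS Pnn by (simp add: f_def)

lemma f_le: "f t r \<le> K"
proof (cases "P (cyl r t) = 0")
  case True then show ?thesis using K0 by (simp add: f_def)
next
  case False
  then have "P (cyl r t) > 0" using Pnn[of "cyl r t"] by simp
  then show ?thesis using le cS[of r t] by (simp add: f_def divide_le_eq mult.commute)
qed

lemma sumP1: "(\<Sum>r\<in>reps t. P (cyl r t)) = 1"
  using charge_decomp[OF sa cy fap_charge[OF fP] S_UNIV[OF sa], of t] fP by (simp add: fap_def)

lemma sum_mu: "(\<Sum>r\<in>reps t. \<mu> (cyl r t)) = \<mu> UNIV"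
  using charge_decomp[OF sa cy cm S_UNIV[OF sa], of t] by simp

lemma grpP: "s \<le> t \<Longrightarrow> E \<in> S \<Longrightarrow>
   (\<Sum>r'\<in>reps t. g (rep s r') * P (E \<inter> cyl r' t)) = (\<Sum>r\<in>reps s. g r * P (E \<inter> cyl r s))"
  by (rule charge_group[OF sa cy fap_charge[OF fP]])

lemma grpmu: "s \<le> t \<Longrightarrow> E \<in> S \<Longrightarrow>
   (\<Sum>r'\<in>reps t. g (rep s r') * \<mu> (E \<inter> cyl r' t)) = (\<Sum>r\<in>reps s. g r * \<mu> (E \<inter> cyl r s))"
  by (rule charge_group[OF sa cy cm])

lemma phi_id:
  assumes st: "s \<le> t"
  shows "(\<Sum>r'\<in>reps t. P (cyl r' t) * (f t r' - f s (rep s r'))^2) = \<phi> t - \<phi> s"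
proof -
  have pt: "P (cyl r' t) * (f t r' - f s (rep s r'))^2
      = f t r' * \<mu> (cyl r' t) - 2 * (f s (rep s r') * \<mu> (cyl r' t)) + (f s (rep s r'))^2 * P (cyl r' t)" for r'
  proof -
    have "P (cyl r' t) * (f t r' - f s (rep s r'))^2
        = (P (cyl r' t) * f t r') * f t r' - 2 * (f s (rep s r') * (P (cyl r' t) * f t r')) + (f s (rep s r'))^2 * P (cyl r' t)"
      by (simp add: power2_eq_square algebra_simps)
    then show ?thesis by (simp add: fmu mult.commute)
  qed
  have A: "(\<Sum>r'\<in>reps t. f s (rep s r') * \<mu> (cyl r' t)) = \<phi> s"
    using grpmu[OF st S_UNIV[OF sa], of "f s"] by (simp add: \<phi>_def)
  have B: "(\<Sum>r'\<in>reps t. (f s (rep s r'))^2 * P (cyl r' t)) = \<phi> s"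
  proof -
    have "(\<Sum>r'\<in>reps t. (f s (rep s r'))^2 * P (cyl r' t)) = (\<Sum>r\<in>reps s. (f s r)^2 * P (cyl r s))"
      using grpP[OF st S_UNIV[OF sa], of "\<lambda>r. (f s r)^2"] by simp
    also have "\<dots> = \<phi> s" unfolding \<phi>_def
    proof (rule sum.cong[OF refl])
      fix r show "(f s r)^2 * P (cyl r s) = f s r * \<mu> (cyl r s)"
        using fmu[of r s] by (simp add: power2_eq_square algebra_simps)
    qed
    finally show ?thesis .
  qed
  show ?thesis
    by (simp add: pt sum.distrib sum_subtractf sum_distrib_left[symmetric] A B \<phi>_def[of t])
qed

lemma phi_mono: "s \<le> t \<Longrightarrow> \<phi> s \<le> \<phi> t"
proof -
  assume st: "s \<le> t"
  have "0 \<le> (\<Sum>r'\<in>reps t. P (cyl r' t) * (f t r' - f s (rep s r'))^2)"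
    using Pnn by (intro sum_nonneg) simp
  then show ?thesis using phi_id[OF st] by simp
qed

lemma phi_bnd: "\<phi> t \<le> K * \<mu> UNIV"
proof -
  have "\<phi> t \<le> (\<Sum>r\<in>reps t. K * \<mu> (cyl r t))"
    unfolding \<phi>_def using f_le nn cS by (intro sum_mono mult_right_mono) auto
  then show ?thesis by (simp add: sum_distrib_left[symmetric] sum_mu)
qed

lemma phi_cauchy: "\<exists>N. \<forall>s\<ge>N. \<forall>t\<ge>s. \<phi> t - \<phi> s < e" if e: "e > 0"
proof -
  have "incseq \<phi>" using phi_mono by (simp add: incseq_def)
  then obtain L where "\<phi> \<longlonglongrightarrow> L" using incseq_convergent[of \<phi> "K * \<mu> UNIV"] phi_bnd by blast
  then have "Cauchy \<phi>" by (rule LIMSEQ_imp_Cauchy)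
  from CauchyD[OF this e] obtain M where M: "\<forall>m\<ge>M. \<forall>n\<ge>M. norm (\<phi> m - \<phi> n) < e" by blast
  show ?thesis
  proof (intro exI allI impI)
    fix s t assume "M \<le> s" "s \<le> t"
    then have "norm (\<phi> t - \<phi> s) < e" using M by auto
    then show "\<phi> t - \<phi> s < e" by simp
  qed
qed

lemma T_alt: "s \<le> t \<Longrightarrow> E \<in> S \<Longrightarrow> T P \<mu> s E = (\<Sum>r'\<in>reps t. f s (rep s r') * P (E \<inter> cyl r' t))"
  using grpP[of s t E "f s"] by (simp add: T_def f_def)

lemma abs_le_sq: "\<delta> > 0 \<Longrightarrow> \<bar>d\<bar> \<le> d^2 / (2*\<delta>) + \<delta>/2" for d \<delta> :: real
proof -
  assume dp: "\<delta> > 0"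
  have "0 \<le> (\<bar>d\<bar> - \<delta>)^2" by simp
  then have "2 * \<delta> * \<bar>d\<bar> \<le> d^2 + \<delta>^2" by (simp add: power2_eq_square algebra_simps abs_mult_self_eq)
  then have "\<bar>d\<bar> \<le> (d^2 + \<delta>^2) / (2*\<delta>)" using dp by (simp add: le_divide_eq mult.commute)
  also have "\<dots> = d^2 / (2*\<delta>) + \<delta>/2" using dp by (simp add: add_divide_distrib power2_eq_square)
  finally show ?thesis .
qed

lemma T_diff:
  assumes st: "s \<le> t" and E: "E \<in> S" and dp: "\<delta> > 0"
  shows "\<bar>T P \<mu> t E - T P \<mu> s E\<bar> \<le> (\<phi> t - \<phi> s) / (2*\<delta>) + \<delta>/2"
proof -
  define d where "d r' = f t r' - f s (rep s r')" for r'
  have "T P \<mu> t E - T P \<mu> s E = (\<Sum>r'\<in>reps t. d r' * P (E \<inter> cyl r' t))"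
    using T_alt[OF st E] by (simp add: T_def f_def d_def sum_subtractf left_diff_distrib)
  then have "\<bar>T P \<mu> t E - T P \<mu> s E\<bar> \<le> (\<Sum>r'\<in>reps t. \<bar>d r'\<bar> * P (E \<inter> cyl r' t))"
    by (simp add: sum_abs[THEN order_trans] abs_mult Pnn)
  also have "\<dots> \<le> (\<Sum>r'\<in>reps t. (P (cyl r' t) * (d r')^2 / (2*\<delta>) + \<delta>/2 * P (cyl r' t)))"
  proof (rule sum_mono)
    fix r' assume "r' \<in> reps t"
    have EcS: "E \<inter> cyl r' t \<in> S" using S_Int[OF sa E cS] .
    have "P (E \<inter> cyl r' t) \<le> P (cyl r' t)"
      using charge_mono[OF sa fap_charge[OF fP] fap_nonneg[OF fP] EcS cS] by blast
    then have "\<bar>d r'\<bar> * P (E \<inter> cyl r' t) \<le> \<bar>d r'\<bar> * P (cyl r' t)" by (intro mult_left_mono) auto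
    also have "\<dots> \<le> ((d r')^2 / (2*\<delta>) + \<delta>/2) * P (cyl r' t)"
      using abs_le_sq[OF dp, of "d r'"] Pnn by (intro mult_right_mono) auto
    finally show "\<bar>d r'\<bar> * P (E \<inter> cyl r' t) \<le> P (cyl r' t) * (d r')^2 / (2*\<delta>) + \<delta>/2 * P (cyl r' t)"
      by (simp add: algebra_simps)
  qed
  also have "\<dots> = (\<Sum>r'\<in>reps t. P (cyl r' t) * (d r')^2) / (2*\<delta>) + \<delta>/2 * (\<Sum>r'\<in>reps t. P (cyl r' t))"
    by (simp add: sum.distrib sum_divide_distrib sum_distrib_left)
  also have "\<dots> = (\<phi> t - \<phi> s) / (2*\<delta>) + \<delta>/2"
    using phi_id[OF st] sumP1 by (simp add: d_def)
  finally show ?thesis .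
qed

lemma T_unif_cauchy:
  assumes g: "\<gamma> > 0"
  shows "\<exists>N. \<forall>s\<ge>N. \<forall>t\<ge>N. \<forall>E\<in>S. \<bar>T P \<mu> t E - T P \<mu> s E\<bar> \<le> \<gamma>"
proof -
  obtain N where N: "\<forall>s\<ge>N. \<forall>t\<ge>s. \<phi> t - \<phi> s < \<gamma>^2" using phi_cauchy[of "\<gamma>^2"] g by auto
  have one: "\<bar>T P \<mu> t E - T P \<mu> s E\<bar> \<le> \<gamma>" if "N \<le> s" "s \<le> t" "E \<in> S" for s t E
  proof -
    have "\<bar>T P \<mu> t E - T P \<mu> s E\<bar> \<le> (\<phi> t - \<phi> s) / (2*\<gamma>) + \<gamma>/2" by (rule T_diff[OF that(2,3) g])
    also have "(\<phi> t - \<phi> s) / (2*\<gamma>) \<le> \<gamma>^2 / (2*\<gamma>)"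
    proof (rule divide_right_mono)
      show "\<phi> t - \<phi> s \<le> \<gamma>^2" using N that(1,2) by (meson less_imp_le)
    qed (use g in simp)
    also have "\<gamma>^2 / (2*\<gamma>) = \<gamma>/2" using g by (simp add: power2_eq_square)
    finally show ?thesis by simp
  qed
  show ?thesis
  proof (intro exI allI impI ballI)
    fix s t E assume "N \<le> s" "N \<le> t" "E \<in> S"
    then show "\<bar>T P \<mu> t E - T P \<mu> s E\<bar> \<le> \<gamma>"
      using one[of s t E] one[of t s E] by (cases "s \<le> t") (auto simp: abs_minus_commute)
  qed
qed

end

context bnd begin

definition nu where "nu E = lim (\<lambda>t. T P \<mu> t E)"

lemma T_lim: assumes E: "E \<in> S" shows "(\<lambda>t. T P \<mu> t E) \<longlonglongrightarrow> nu E"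
proof -
  have "Cauchy (\<lambda>t. T P \<mu> t E)"
  proof (rule CauchyI)
    fix e :: real assume e: "0 < e"
    obtain N where N: "\<forall>s\<ge>N. \<forall>t\<ge>N. \<forall>E\<in>S. \<bar>T P \<mu> t E - T P \<mu> s E\<bar> \<le> e/2"
      using T_unif_cauchy[of "e/2"] e by auto
    show "\<exists>M. \<forall>m\<ge>M. \<forall>n\<ge>M. norm (T P \<mu> m E - T P \<mu> n E) < e"
    proof (intro exI allI impI)
      fix m n assume "N \<le> m" "N \<le> n"
      then have "\<bar>T P \<mu> m E - T P \<mu> n E\<bar> \<le> e/2" using N E by blast
      then show "norm (T P \<mu> m E - T P \<mu> n E) < e" using e by simp
    qed
  qed
  then show ?thesis unfolding nu_def by (simp add: Cauchy_convergent_iff convergent_LIMSEQ_iff)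
qed

lemma T_charge: "charge S (T P \<mu> t)"
  unfolding charge_def
proof (intro ballI impI)
  fix A B assume A: "A \<in> S" and B: "B \<in> S" and AB: "A \<inter> B = {}"
  have "P ((A \<union> B) \<inter> cyl r t) = P (A \<inter> cyl r t) + P (B \<inter> cyl r t)" for r
  proof -
    have "(A \<union> B) \<inter> cyl r t = (A \<inter> cyl r t) \<union> (B \<inter> cyl r t)" by blast
    moreover have "A \<inter> cyl r t \<in> S" "B \<inter> cyl r t \<in> S" using S_Int[OF sa _ cS] A B by auto
    moreover have "(A \<inter> cyl r t) \<inter> (B \<inter> cyl r t) = {}" using AB by blast
    ultimately show ?thesis using charge_add[OF fap_charge[OF fP]] by simp
  qed
  then show "T P \<mu> t (A \<union> B) = T P \<mu> t A + T P \<mu> t B"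
    by (simp add: T_def sum.distrib distrib_left)
qed

lemma T_bnds: assumes E: "E \<in> S" shows "0 \<le> T P \<mu> t E \<and> T P \<mu> t E \<le> K * P E"
proof
  show "0 \<le> T P \<mu> t E" unfolding T_def using f_nn Pnn by (intro sum_nonneg) (simp add: f_def[symmetric])
  have "T P \<mu> t E \<le> (\<Sum>r\<in>reps t. K * P (E \<inter> cyl r t))"
    unfolding T_def using f_le Pnn by (intro sum_mono mult_right_mono) (simp_all add: f_def[symmetric])
  also have "\<dots> = K * P E"
    using charge_decomp[OF sa cy fap_charge[OF fP] E, of t] by (simp add: sum_distrib_left)
  finally show "T P \<mu> t E \<le> K * P E" .
qed

lemma T_alg: assumes F: "F \<in> cyl_alg" shows "\<exists>L. \<forall>t\<ge>L. T P \<mu> t F = \<mu> F"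
proof -
  obtain L where L: "\<forall>t\<ge>L. \<forall>r. cyl r t \<subseteq> F \<or> cyl r t \<inter> F = {}" using cyl_alg_level[OF F] by blast
  have FS: "F \<in> S" using cyl_alg_S[OF sa cy] F by blast
  have "T P \<mu> t F = \<mu> F" if t: "t \<ge> L" for t
  proof -
    have "T P \<mu> t F = (\<Sum>r\<in>reps t. \<mu> (F \<inter> cyl r t))"
      unfolding T_def
    proof (rule sum.cong[OF refl])
      fix r assume "r \<in> reps t"
      show "\<mu> (cyl r t) / P (cyl r t) * P (F \<inter> cyl r t) = \<mu> (F \<inter> cyl r t)"
      proof (cases "cyl r t \<subseteq> F")
        case True
        then have "F \<inter> cyl r t = cyl r t" by blast
        then show ?thesis using fmu[of r t] by (simp add: f_def mult.commute)
      next
        case False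
        then have "F \<inter> cyl r t = {}" using L t by blast
        then show ?thesis using charge_empty[OF sa fap_charge[OF fP]] charge_empty[OF sa cm] by simp
      qed
    qed
    also have "\<dots> = \<mu> F" using charge_decomp[OF sa cy cm FS, of t] by simp
    finally show ?thesis .
  qed
  then show ?thesis by blast
qed

lemma nu_charge: "charge S nu"
  unfolding charge_def
proof (intro ballI impI)
  fix A B assume A: "A \<in> S" and B: "B \<in> S" and AB: "A \<inter> B = {}"
  have AB': "A \<union> B \<in> S" by (rule S_Un[OF sa A B])
  have "(\<lambda>t. T P \<mu> t (A \<union> B)) = (\<lambda>t. T P \<mu> t A + T P \<mu> t B)"
    using charge_add[OF T_charge A B AB] by simp
  then have "(\<lambda>t. T P \<mu> t A + T P \<mu> t B) \<longlonglongrightarrow> nu (A \<union> B)" using T_lim[OF AB'] by simp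
  moreover have "(\<lambda>t. T P \<mu> t A + T P \<mu> t B) \<longlonglongrightarrow> nu A + nu B" by (intro tendsto_add T_lim A B)
  ultimately show "nu (A \<union> B) = nu A + nu B" using LIMSEQ_unique by blast
qed

lemma nu_bnds: assumes E: "E \<in> S" shows "0 \<le> nu E \<and> nu E \<le> K * P E"
proof
  show "0 \<le> nu E" by (rule LIMSEQ_le_const[OF T_lim[OF E]]) (use T_bnds[OF E] in auto)
  show "nu E \<le> K * P E" by (rule LIMSEQ_le_const2[OF T_lim[OF E]]) (use T_bnds[OF E] in auto)
qed

lemma nu_alg: assumes F: "F \<in> cyl_alg" shows "nu F = \<mu> F"
proof -
  have FS: "F \<in> S" using cyl_alg_S[OF sa cy] F by blast
  obtain L where L: "\<forall>t\<ge>L. T P \<mu> t F = \<mu> F" using T_alg[OF F] by blast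
  have "(\<lambda>t. T P \<mu> t F) \<longlonglongrightarrow> \<mu> F"
    by (rule tendsto_eventually) (use L in \<open>auto simp: eventually_at_top_linorder\<close>)
  then show ?thesis using T_lim[OF FS] LIMSEQ_unique by blast
qed

lemma T_conv:
  assumes ex: "extreme_point (EP S P) P" and g: "\<gamma> > 0"
  shows "\<exists>N. \<forall>t\<ge>N. \<forall>E\<in>S. \<bar>T P \<mu> t E - \<mu> E\<bar> \<le> \<gamma>"
proof -
  have eq: "\<forall>E\<in>S. nu E = \<mu> E"
  proof (rule extreme_unique[OF sa cy fP ex nu_charge cm])
    show "\<forall>E\<in>S. 0 \<le> nu E \<and> nu E \<le> K * P E" using nu_bnds by blast
    show "\<forall>E\<in>S. 0 \<le> \<mu> E \<and> \<mu> E \<le> K * P E" using nn le by blast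
    show "\<forall>F\<in>cyl_alg. nu F = \<mu> F" using nu_alg by blast
  qed
  obtain N where N: "\<forall>s\<ge>N. \<forall>t\<ge>N. \<forall>E\<in>S. \<bar>T P \<mu> t E - T P \<mu> s E\<bar> \<le> \<gamma>"
    using T_unif_cauchy[OF g] by blast
  show ?thesis
  proof (intro exI allI impI ballI)
    fix t E assume t: "N \<le> t" and E: "E \<in> S"
    have "(\<lambda>s. \<bar>T P \<mu> t E - T P \<mu> s E\<bar>) \<longlonglongrightarrow> \<bar>T P \<mu> t E - nu E\<bar>"
      by (intro tendsto_intros T_lim E)
    then have "\<bar>T P \<mu> t E - nu E\<bar> \<le> \<gamma>"
      by (rule LIMSEQ_le_const2) (use N t E in auto)
    then show "\<bar>T P \<mu> t E - \<mu> E\<bar> \<le> \<gamma>" using eq E by simp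
  qed
qed

end

lemma fap_le1: "sigma_algebra UNIV S \<Longrightarrow> fap S Q \<Longrightarrow> Q B \<le> 1"
proof -
  assume sa: "sigma_algebra UNIV S" and fQ: "fap S Q"
  show "Q B \<le> 1"
  proof (cases "B \<in> S")
    case True
    then have "Q B \<le> Q UNIV"
      using charge_mono[OF sa fap_charge[OF fQ] fap_nonneg[OF fQ] True S_UNIV[OF sa]] by blast
    then show ?thesis using fQ by (simp add: fap_def)
  next
    case False then show ?thesis using fQ by (simp add: fap_def)
  qed
qed

lemma unif_ac:
  assumes sa: "sigma_algebra UNIV S" and fP: "fap S P" and fQ: "fap S Q" and ac: "abs_cont S Q P"
    and g: "\<gamma> > 0"
  shows "\<exists>K\<ge>0. \<forall>B\<in>S. Q B - K * P B \<le> \<gamma>"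
proof (rule ccontr)
  assume "\<not> ?thesis"
  then have "\<forall>n. \<exists>B. B \<in> S \<and> Q B - real (Suc n) * P B > \<gamma>"
    by (metis not_le of_nat_0_le_iff)
  then obtain B where B: "\<And>n. B n \<in> S" "\<And>n. Q (B n) - real (Suc n) * P (B n) > \<gamma>" by metis
  have Pb: "P (B n) \<le> inverse (real (Suc n))" for n
  proof -
    have "real (Suc n) * P (B n) < Q (B n) - \<gamma>" using B(2)[of n] by simp
    also have "\<dots> \<le> 1" using fap_le1[OF sa fQ] g by (smt (verit))
    finally have "real (Suc n) * P (B n) \<le> 1" by simp
    then show ?thesis by (simp add: field_simps)
  qed
  have "(\<lambda>n. P (B n)) \<longlonglongrightarrow> 0"
  proof (rule tendsto_sandwich[OF _ _ tendsto_const LIMSEQ_inverse_real_of_nat])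
    show "\<forall>\<^sub>F n in sequentially. 0 \<le> P (B n)" using fap_nonneg'[OF fP] by simp
    show "\<forall>\<^sub>F n in sequentially. P (B n) \<le> inverse (real (Suc n))" using Pb by simp
  qed
  then have "(\<lambda>n. Q (B n)) \<longlonglongrightarrow> 0" using ac B(1) unfolding abs_cont_def by blast
  moreover have "\<gamma> \<le> Q (B n)" for n
    using B(2)[of n] fap_nonneg'[OF fP, of "B n"] by (smt (verit) of_nat_0_le_iff mult_nonneg_nonneg)
  ultimately have "\<gamma> \<le> 0" by (intro LIMSEQ_le_const) auto
  then show False using g by simp
qed

locale qdec =
  fixes S P Q and K :: real
  assumes sa: "sigma_algebra UNIV S" and cy: "cylinders \<subseteq> S" and fP: "fap S P" and fQ: "fap S Q"
    and K0: "K \<ge> 0"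
begin

definition \<rho> where "\<rho> E = (SUP B\<in>{B\<in>S. B \<subseteq> E}. Q B - K * P B)"

lemma Qmono: "A \<in> S \<Longrightarrow> B \<in> S \<Longrightarrow> A \<subseteq> B \<Longrightarrow> Q A \<le> Q B"
  using charge_mono[OF sa fap_charge[OF fQ] fap_nonneg[OF fQ]] by blast

lemma bdd: "E \<in> S \<Longrightarrow> bdd_above ((\<lambda>B. Q B - K * P B) ` {B\<in>S. B \<subseteq> E})"
proof (rule bdd_aboveI2)
  fix B assume E: "E \<in> S" and "B \<in> {B\<in>S. B \<subseteq> E}"
  then have "Q B \<le> Q E" "0 \<le> K * P B" using Qmono K0 fap_nonneg'[OF fP] by auto
  then show "Q B - K * P B \<le> Q E" by simp
qed

lemma ne: "{B\<in>S. B \<subseteq> E} \<noteq> {}" using S_empty[OF sa] by blast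

lemma rho_ge: "E \<in> S \<Longrightarrow> B \<in> S \<Longrightarrow> B \<subseteq> E \<Longrightarrow> Q B - K * P B \<le> \<rho> E"
  unfolding \<rho>_def by (rule cSUP_upper[OF _ bdd]) auto

lemma rho_le: "(\<And>B. B \<in> S \<Longrightarrow> B \<subseteq> E \<Longrightarrow> Q B - K * P B \<le> c) \<Longrightarrow> \<rho> E \<le> c"
  unfolding \<rho>_def by (rule cSUP_least[OF ne]) auto

lemma rho_nn: "E \<in> S \<Longrightarrow> 0 \<le> \<rho> E"
  using rho_ge[of E "{}"] S_empty[OF sa] charge_empty[OF sa fap_charge[OF fQ]] charge_empty[OF sa fap_charge[OF fP]]
  by simp

lemma rho_leQ: "E \<in> S \<Longrightarrow> \<rho> E \<le> Q E"
proof (rule rho_le)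
  fix B assume "E \<in> S" "B \<in> S" "B \<subseteq> E"
  then have "Q B \<le> Q E" "0 \<le> K * P B" using Qmono K0 fap_nonneg'[OF fP] by auto
  then show "Q B - K * P B \<le> Q E" by simp
qed

lemma rho_geQ: "E \<in> S \<Longrightarrow> Q E - K * P E \<le> \<rho> E"
  by (rule rho_ge) auto

lemma rho_charge: "charge S \<rho>"
  unfolding charge_def
proof (intro ballI impI)
  fix A C assume A: "A \<in> S" and C: "C \<in> S" and AC: "A \<inter> C = {}"
  have AC': "A \<union> C \<in> S" by (rule S_Un[OF sa A C])
  have split: "Q B - K * P B = (Q (B \<inter> A) - K * P (B \<inter> A)) + (Q (B \<inter> C) - K * P (B \<inter> C))"
    if B: "B \<in> S" "B \<subseteq> A \<union> C" for B
  proof -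
    have "B = (B \<inter> A) \<union> (B \<inter> C)" using B by blast
    moreover have "B \<inter> A \<in> S" "B \<inter> C \<in> S" using S_Int[OF sa] A C B by auto
    moreover have "(B \<inter> A) \<inter> (B \<inter> C) = {}" using AC by blast
    ultimately have "Q B = Q (B \<inter> A) + Q (B \<inter> C)" "P B = P (B \<inter> A) + P (B \<inter> C)"
      using charge_add[OF fap_charge[OF fQ]] charge_add[OF fap_charge[OF fP]] by metis+
    then show ?thesis by (simp add: algebra_simps)
  qed
  show "\<rho> (A \<union> C) = \<rho> A + \<rho> C"
  proof (rule antisym)
    show "\<rho> (A \<union> C) \<le> \<rho> A + \<rho> C"
    proof (rule rho_le)
      fix B assume B: "B \<in> S" "B \<subseteq> A \<union> C"
      have "Q (B \<inter> A) - K * P (B \<inter> A) \<le> \<rho> A" using rho_ge[OF A] S_Int[OF sa B(1) A] by auto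
      moreover have "Q (B \<inter> C) - K * P (B \<inter> C) \<le> \<rho> C" using rho_ge[OF C] S_Int[OF sa B(1) C] by auto
      ultimately show "Q B - K * P B \<le> \<rho> A + \<rho> C" using split[OF B] by simp
    qed
  next
    have "\<rho> A \<le> \<rho> (A \<union> C) - \<rho> C"
    proof (rule rho_le)
      fix B1 assume B1: "B1 \<in> S" "B1 \<subseteq> A"
      have "\<rho> C \<le> \<rho> (A \<union> C) - (Q B1 - K * P B1)"
      proof (rule rho_le)
        fix B2 assume B2: "B2 \<in> S" "B2 \<subseteq> C"
        have U: "B1 \<union> B2 \<in> S" "B1 \<union> B2 \<subseteq> A \<union> C" using S_Un[OF sa B1(1) B2(1)] B1 B2 by auto
        have "(B1 \<union> B2) \<inter> A = B1" "(B1 \<union> B2) \<inter> C = B2" using B1 B2 AC by auto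
        then have "Q (B1 \<union> B2) - K * P (B1 \<union> B2) = (Q B1 - K * P B1) + (Q B2 - K * P B2)"
          using split[OF U] by simp
        moreover have "Q (B1 \<union> B2) - K * P (B1 \<union> B2) \<le> \<rho> (A \<union> C)" using rho_ge[OF AC' U] .
        ultimately show "Q B2 - K * P B2 \<le> \<rho> (A \<union> C) - (Q B1 - K * P B1)" by simp
      qed
      then show "Q B1 - K * P B1 \<le> \<rho> (A \<union> C) - \<rho> C" by simp
    qed
    then show "\<rho> A + \<rho> C \<le> \<rho> (A \<union> C)" by simp
  qed
qed

definition QK where "QK E = Q E - \<rho> E"

lemma QK_charge: "charge S QK"
  using charge_add[OF fap_charge[OF fQ]] charge_add[OF rho_charge] unfolding charge_def QK_def by simp

lemma QK_bnd: "bnd S P QK K"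
proof (rule bnd.intro)
  show "sigma_algebra UNIV S" "cylinders \<subseteq> S" "fap S P" by (rule sa, rule cy, rule fP)
  show "charge S QK" by (rule QK_charge)
  show "\<forall>E\<in>S. 0 \<le> QK E" using rho_leQ by (simp add: QK_def)
  show "\<forall>E\<in>S. QK E \<le> K * P E" using rho_geQ by (force simp add: QK_def)
qed

lemma T_split: "T P Q t E = T P QK t E + T P \<rho> t E"
  unfolding T_def QK_def by (simp add: sum.distrib[symmetric] add_divide_distrib[symmetric] distrib_right[symmetric])

lemma T_rho: assumes E: "E \<in> S" shows "0 \<le> T P \<rho> t E \<and> T P \<rho> t E \<le> \<rho> UNIV"
proof -
  have cS: "cyl r t \<in> S" for r using cy by auto
  have trm: "0 \<le> \<rho> (cyl r t) / P (cyl r t) * P (E \<inter> cyl r t) \<and>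
              \<rho> (cyl r t) / P (cyl r t) * P (E \<inter> cyl r t) \<le> \<rho> (cyl r t)" for r
  proof -
    have rb: "0 \<le> P (E \<inter> cyl r t) / P (cyl r t) \<and> P (E \<inter> cyl r t) / P (cyl r t) \<le> 1"
      by (rule ratio_bound[OF sa fP E cS])
    have eq: "\<rho> (cyl r t) / P (cyl r t) * P (E \<inter> cyl r t) = \<rho> (cyl r t) * (P (E \<inter> cyl r t) / P (cyl r t))"
      by simp
    have rn: "0 \<le> \<rho> (cyl r t)" by (rule rho_nn[OF cS])
    have "0 \<le> \<rho> (cyl r t) * (P (E \<inter> cyl r t) / P (cyl r t))" using rb rn by (intro mult_nonneg_nonneg) auto
    moreover have "\<rho> (cyl r t) * (P (E \<inter> cyl r t) / P (cyl r t)) \<le> \<rho> (cyl r t)"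
      using rb rn mult_left_le by blast
    ultimately show ?thesis unfolding eq by blast
  qed
  have "T P \<rho> t E \<le> (\<Sum>r\<in>reps t. \<rho> (cyl r t))" unfolding T_def using trm by (intro sum_mono) blast
  also have "\<dots> = \<rho> UNIV" using charge_decomp[OF sa cy rho_charge S_UNIV[OF sa], of t] by simp
  finally show ?thesis unfolding T_def using trm by (auto intro: sum_nonneg)
qed

end

lemma Q_conv:
  assumes sa: "sigma_algebra UNIV S" and cy: "cylinders \<subseteq> S" and fP: "fap S P" and fQ: "fap S Q"
    and ex: "extreme_point (EP S P) P" and ac: "abs_cont S Q P" and g: "\<gamma> > 0"
  shows "\<exists>N. \<forall>t\<ge>N. \<forall>E\<in>S. \<bar>T P Q t E - Q E\<bar> \<le> \<gamma>"
proof -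
  obtain K where K: "K \<ge> 0" "\<forall>B\<in>S. Q B - K * P B \<le> \<gamma>/2" using unif_ac[OF sa fP fQ ac, of "\<gamma>/2"] g by auto
  interpret qdec S P Q K by (rule qdec.intro[OF sa cy fP fQ K(1)])
  interpret b: bnd S P QK K by (rule QK_bnd)
  have rU: "\<rho> UNIV \<le> \<gamma>/2" by (rule rho_le) (use K in auto)
  obtain N where N: "\<forall>t\<ge>N. \<forall>E\<in>S. \<bar>T P QK t E - QK E\<bar> \<le> \<gamma>/2" using b.T_conv[OF ex, of "\<gamma>/2"] g by auto
  show ?thesis
  proof (intro exI allI impI ballI)
    fix t E assume t: "N \<le> t" and E: "E \<in> S"
    have "\<bar>T P QK t E - QK E\<bar> \<le> \<gamma>/2" using N t E by blast
    moreover have "0 \<le> T P \<rho> t E" "T P \<rho> t E \<le> \<gamma>/2" using T_rho[OF E, of t] rU by auto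
    moreover have "0 \<le> \<rho> E" "\<rho> E \<le> \<gamma>/2" using rho_nn[OF E] rho_le[of E "\<gamma>/2"] K by auto
    ultimately show "\<bar>T P Q t E - Q E\<bar> \<le> \<gamma>" unfolding T_split QK_def by linarith
  qed
qed

lemma T_charge_gen:
  assumes sa: "sigma_algebra UNIV S" and cy: "cylinders \<subseteq> S" and fP: "fap S P"
  shows "charge S (T P \<mu> t)"
  unfolding charge_def
proof (intro ballI impI)
  fix A B assume A: "A \<in> S" and B: "B \<in> S" and AB: "A \<inter> B = {}"
  have "P ((A \<union> B) \<inter> cyl r t) = P (A \<inter> cyl r t) + P (B \<inter> cyl r t)" for r
  proof -
    have cS: "cyl r t \<in> S" using cy by auto
    have "(A \<union> B) \<inter> cyl r t = (A \<inter> cyl r t) \<union> (B \<inter> cyl r t)" by blast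
    moreover have "A \<inter> cyl r t \<in> S" "B \<inter> cyl r t \<in> S" using S_Int[OF sa _ cS] A B by auto
    moreover have "(A \<inter> cyl r t) \<inter> (B \<inter> cyl r t) = {}" using AB by blast
    ultimately show ?thesis using charge_add[OF fap_charge[OF fP]] by simp
  qed
  then show "T P \<mu> t (A \<union> B) = T P \<mu> t A + T P \<mu> t B"
    by (simp add: T_def sum.distrib distrib_left)
qed

lemma T_cyl:
  assumes sa: "sigma_algebra UNIV S" and fP: "fap S P" and r: "r \<in> reps t"
  shows "T P Q t (E \<inter> cyl r t) = Q (cyl r t) / P (cyl r t) * P (E \<inter> cyl r t)"
proof -
  have P0: "P {} = 0" using charge_empty[OF sa fap_charge[OF fP]] .
  have "T P Q t (E \<inter> cyl r t) = (\<Sum>r'\<in>reps t. if r' = r then Q (cyl r t) / P (cyl r t) * P (E \<inter> cyl r t) else 0)"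
    unfolding T_def
  proof (rule sum.cong[OF refl])
    fix r' assume r': "r' \<in> reps t"
    show "Q (cyl r' t) / P (cyl r' t) * P (E \<inter> cyl r t \<inter> cyl r' t) =
          (if r' = r then Q (cyl r t) / P (cyl r t) * P (E \<inter> cyl r t) else 0)"
    proof (cases "r' = r")
      case True then show ?thesis by (simp add: Int_assoc)
    next
      case False
      then have "E \<inter> cyl r t \<inter> cyl r' t = {}" using cyl_disj[OF r r'] by blast
      then show ?thesis using False P0 by simp
    qed
  qed
  also have "\<dots> = Q (cyl r t) / P (cyl r t) * P (E \<inter> cyl r t)" using r finite_reps by simp
  finally show ?thesis .
qed

lemma bad_bound:
  assumes sa: "sigma_algebra UNIV S" and cy: "cylinders \<subseteq> S" and fP: "fap S P" and fQ: "fap S Q"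
    and ac: "abs_cont S Q P" and e: "\<epsilon> > 0"
    and approx: "\<forall>E\<in>S. \<bar>T P Q t E - Q E\<bar> \<le> \<gamma>"
    and \<Phi>: "\<Phi> = (\<lambda>c. Q c > 0 \<and> (P c = 0 \<or> (SUP E\<in>S. \<bar>P (E \<inter> c) / P c - Q (E \<inter> c) / Q c\<bar>) > \<epsilon>))"
  shows "\<epsilon> * Q {w. \<Phi> (cyl w t)} \<le> 2 * \<gamma>"
proof -
  define G where "G = {r\<in>reps t. \<Phi> (cyl r t)}"
  have finG: "finite G" using finite_reps[of t] by (simp add: G_def)
  define \<nu> where "\<nu> X = T P Q t X - Q X" for X
  have cnu: "charge S \<nu>"
    using charge_add[OF T_charge_gen[OF sa cy fP, of Q t]] charge_add[OF fap_charge[OF fQ]]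
    unfolding charge_def \<nu>_def by simp
  have cS: "cyl r t \<in> S" for r using cy by auto
  have wit: "\<exists>E\<in>S. \<epsilon> * Q (cyl r t) < \<bar>\<nu> (E \<inter> cyl r t)\<bar>" if rG: "r \<in> G" for r
  proof -
    define c where "c = cyl r t"
    have r: "r \<in> reps t" and Qp: "Q c > 0" and dis: "P c = 0 \<or> (SUP E\<in>S. \<bar>P (E \<inter> c) / P c - Q (E \<inter> c) / Q c\<bar>) > \<epsilon>"
      using rG by (auto simp: G_def \<Phi> c_def)
    have Pc: "P c \<noteq> 0"
    proof
      assume "P c = 0"
      then have "(\<lambda>n. P c) \<longlonglongrightarrow> 0" by simp
      moreover have "\<forall>n::nat. c \<in> S" using cS[of r] by (simp add: c_def)
      ultimately have "(\<lambda>n::nat. Q c) \<longlonglongrightarrow> 0" using ac[unfolded abs_cont_def, rule_format, of "\<lambda>n. c"] by blast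
      then have "Q c = 0" by (simp add: LIMSEQ_const_iff)
      then show False using Qp by simp
    qed
    then have "(SUP E\<in>S. \<bar>P (E \<inter> c) / P c - Q (E \<inter> c) / Q c\<bar>) > \<epsilon>" using dis by simp
    then obtain E where E: "E \<in> S" "\<epsilon> < \<bar>P (E \<inter> c) / P c - Q (E \<inter> c) / Q c\<bar>"
      using less_cSUP_iff[OF _ bdd_sup[OF sa fP fQ cS[of r]]] S_empty[OF sa] by (auto simp: c_def)
    have "\<nu> (E \<inter> c) = Q c / P c * P (E \<inter> c) - Q (E \<inter> c)"
      using T_cyl[OF sa fP r] by (simp add: \<nu>_def c_def)
    also have "\<dots> = Q c * (P (E \<inter> c) / P c - Q (E \<inter> c) / Q c)" using Qp by (simp add: field_simps)
    finally have "\<bar>\<nu> (E \<inter> c)\<bar> = Q c * \<bar>P (E \<inter> c) / P c - Q (E \<inter> c) / Q c\<bar>" using Qp by (simp add: abs_mult)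
    moreover have "\<epsilon> * Q c < Q c * \<bar>P (E \<inter> c) / P c - Q (E \<inter> c) / Q c\<bar>"
      using E(2) Qp by (simp add: mult.commute)
    ultimately have "\<epsilon> * Q c < \<bar>\<nu> (E \<inter> c)\<bar>" by simp
    then show ?thesis using E(1) unfolding c_def by blast
  qed
  obtain Ef where Ef: "\<And>r. r \<in> G \<Longrightarrow> Ef r \<in> S \<and> \<epsilon> * Q (cyl r t) < \<bar>\<nu> (Ef r \<inter> cyl r t)\<bar>"
    using wit by metis
  define A where "A r = Ef r \<inter> cyl r t" for r
  have AS: "A r \<in> S" if "r \<in> G" for r using Ef[OF that] S_Int[OF sa _ cS] by (simp add: A_def)
  have Adisj: "disjoint_family_on A H" if "H \<subseteq> G" for H
    unfolding disjoint_family_on_def A_def using cyl_disj that by (auto simp: G_def)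
  define Gp where "Gp = {r\<in>G. 0 \<le> \<nu> (A r)}"
  define Gm where "Gm = {r\<in>G. \<not> 0 \<le> \<nu> (A r)}"
  have part: "(\<Sum>r\<in>G. Q (cyl r t)) = (\<Sum>r\<in>Gp. Q (cyl r t)) + (\<Sum>r\<in>Gm. Q (cyl r t))"
  proof -
    have GU: "G = Gp \<union> Gm" by (auto simp: Gp_def Gm_def)
    have "finite Gp" "finite Gm" "Gp \<inter> Gm = {}" using finG by (auto simp: Gp_def Gm_def)
    then show ?thesis by (subst GU, rule sum.union_disjoint)
  qed
  have sp: "\<epsilon> * (\<Sum>r\<in>Gp. Q (cyl r t)) \<le> \<gamma>"
  proof -
    have finp: "finite Gp" using finG by (simp add: Gp_def)
    have US: "(\<Union>r\<in>Gp. A r) \<in> S" using AS finp by (intro S_UN[OF sa]) (auto simp: Gp_def)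
    have "\<epsilon> * (\<Sum>r\<in>Gp. Q (cyl r t)) = (\<Sum>r\<in>Gp. \<epsilon> * Q (cyl r t))" by (simp add: sum_distrib_left)
    also have "\<dots> \<le> (\<Sum>r\<in>Gp. \<nu> (A r))"
    proof (rule sum_mono)
      fix r assume "r \<in> Gp"
      then show "\<epsilon> * Q (cyl r t) \<le> \<nu> (A r)" using Ef[of r] by (auto simp: Gp_def A_def)
    qed
    also have "\<dots> = \<nu> (\<Union>r\<in>Gp. A r)"
      using AS by (intro charge_sum[OF sa cnu finp, symmetric] Adisj) (auto simp: Gp_def)
    also have "\<dots> \<le> \<gamma>" using approx US by (simp add: \<nu>_def abs_le_iff)
    finally show ?thesis .
  qed
  have sm: "\<epsilon> * (\<Sum>r\<in>Gm. Q (cyl r t)) \<le> \<gamma>"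
  proof -
    have finm: "finite Gm" using finG by (simp add: Gm_def)
    have US: "(\<Union>r\<in>Gm. A r) \<in> S" using AS finm by (intro S_UN[OF sa]) (auto simp: Gm_def)
    have "\<epsilon> * (\<Sum>r\<in>Gm. Q (cyl r t)) = (\<Sum>r\<in>Gm. \<epsilon> * Q (cyl r t))" by (simp add: sum_distrib_left)
    also have "\<dots> \<le> (\<Sum>r\<in>Gm. - \<nu> (A r))"
    proof (rule sum_mono)
      fix r assume "r \<in> Gm"
      then show "\<epsilon> * Q (cyl r t) \<le> - \<nu> (A r)" using Ef[of r] by (auto simp: Gm_def A_def)
    qed
    also have "\<dots> = - \<nu> (\<Union>r\<in>Gm. A r)"
      using AS by (simp add: sum_negf, intro charge_sum[OF sa cnu finm, symmetric] Adisj) (auto simp: Gm_def)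
    also have "\<dots> \<le> \<gamma>" using approx US by (simp add: \<nu>_def abs_le_iff)
    finally show ?thesis .
  qed
  have "Q {w. \<Phi> (cyl w t)} = (\<Sum>r\<in>G. Q (cyl r t))"
    using cyl_set_measure[OF sa cy fap_charge[OF fQ]] by (simp add: G_def)
  then show ?thesis using part sp sm by (simp add: distrib_left)
qed

lemma dir12:
  assumes sa: "sigma_algebra UNIV S" and cy: "cylinders \<subseteq> S" and fP: "fap S P"
    and ex: "extreme_point (EP S P) P"
  shows "blackwell_dubins S P"
  unfolding blackwell_dubins_def
proof (intro allI impI)
  fix Q assume fQ: "fap S Q" and ac: "abs_cont S Q P"
  show "merges S P Q"
    unfolding merges_def
  proof (intro allI impI)
    fix \<epsilon> :: real assume e: "\<epsilon> > 0"
    define \<Phi> where "\<Phi> = (\<lambda>c. Q c > 0 \<and> (P c = 0 \<or> (SUP E\<in>S. \<bar>P (E \<inter> c) / P c - Q (E \<inter> c) / Q c\<bar>) > \<epsilon>))"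
    have "(\<lambda>t. Q {w. \<Phi> (cyl w t)}) \<longlonglongrightarrow> 0"
    proof (rule LIMSEQ_I)
      fix r :: real assume r: "0 < r"
      define \<gamma> where "\<gamma> = r * \<epsilon> / 4"
      have g: "\<gamma> > 0" using r e by (simp add: \<gamma>_def)
      obtain N where N: "\<forall>t\<ge>N. \<forall>E\<in>S. \<bar>T P Q t E - Q E\<bar> \<le> \<gamma>"
        using Q_conv[OF sa cy fP fQ ex ac g] by blast
      show "\<exists>no. \<forall>n\<ge>no. norm (Q {w. \<Phi> (cyl w n)} - 0) < r"
      proof (intro exI allI impI)
        fix t assume t: "N \<le> t"
        have "\<epsilon> * Q {w. \<Phi> (cyl w t)} \<le> 2 * \<gamma>"
          by (rule bad_bound[OF sa cy fP fQ ac e _ \<Phi>_def]) (use N t in blast)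
        then have "Q {w. \<Phi> (cyl w t)} \<le> 2 * \<gamma> / \<epsilon>" using e by (simp add: le_divide_eq mult.commute)
        also have "\<dots> = r / 2" using e by (simp add: \<gamma>_def)
        finally have "Q {w. \<Phi> (cyl w t)} \<le> r / 2" .
        moreover have "0 \<le> Q {w. \<Phi> (cyl w t)}" by (rule fap_nonneg'[OF fQ])
        ultimately show "norm (Q {w. \<Phi> (cyl w t)} - 0) < r" using r by simp
      qed
    qed
    then show "(\<lambda>t. Q {w. 0 < Q (cyl w t) \<and> (P (cyl w t) = 0 \<or>
        \<epsilon> < (SUP E\<in>S. \<bar>cond_prob P E w t - cond_prob Q E w t\<bar>))}) \<longlonglongrightarrow> 0"
      unfolding cond_prob_def \<Phi>_def by simp
  qed
qed

theorem theorem8: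
  fixes S :: "path set set" and P :: "path set \<Rightarrow> real"
  assumes "sigma_algebra UNIV S"
    and "cylinders \<subseteq> S"
    and "fap S P"
  shows "(extreme_point (EP S P) P \<longleftrightarrow> blackwell_dubins S P)
       \<and> (blackwell_dubins S P \<longleftrightarrow>
           (\<forall>Q R. \<forall>\<alpha>::real. fap S Q \<longrightarrow> fap S R \<longrightarrow> 0 < \<alpha> \<longrightarrow> \<alpha> < 1 \<longrightarrow>
              P = (\<lambda>E. \<alpha> * Q E + (1 - \<alpha>) * R E) \<longrightarrow> merges S P Q \<and> merges S P R))"
  using dir12[OF assms] dir23[of S P] dir31[OF assms] by blast

end
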